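(* Let $X$ be a Banach space and $M,N:\Sigma\to cb(X)$ be $d_H$-multimeasures. Suppose there exists a bounded measurable $\theta:\Omega\to\mathbb R$ such that $\langle y',j\circ M(E)\rangle=\int_E\theta\,d\langle y',j\circ N\rangle$ for all $E\in\Sigma$ and all $y'\in\ell_\infty(B_{X'})'$. Then there exists $d>0$ such that for every $E\in\Sigma$ $$M(E)\subseteq d\,\overline{\mathrm{aco}}\big[\mathcal R(N_E)\cup\mathcal R(-N_E)\big].$$
   Context: $(\Omega,\Sigma)$ is a measurable space, $X$ a Banach space with dual unit ball $B_{X'}$. $cb(X)$: nonempty closed bounded convex subsets of $X$ with Hausdorff metric $d_H$; $s(x',C)=\sup\{\langle x',x\rangle:x\in C\}$. A $d_H$-multimeasure is $M:\Sigma\to cb(X)$ countably additive in $d_H$. $-N$: $E\mapsto\{-x:x\in N(E)\}$. Rådström embedding: $j(A)=s(\cdot,A)|_{B_{X'}}\in\ell_\infty(B_{X'})$. $\Sigma_E=\{F\in\Sigma:F\subseteq E\}$; $\mathcal R(N_E)=\{z\in X:\exists F\in\Sigma_E,\ z\in N(F)\}$, and similarly $\mathcal R(-N_E)$. $\overline{\mathrm{aco}}$ denotes the closed absolutely convex hull in $X$. *)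

theory Defs
  imports "HOL-Analysis.Analysis"
begin

definition hausdorff_dist :: "'a::metric_space set \<Rightarrow> 'a set \<Rightarrow> real" where
  "hausdorff_dist A B = max (SUP a\<in>A. infdist a B) (SUP b\<in>B. infdist b A)"

definition cb :: "'x::real_normed_vector set set" where
  "cb = {C. C \<noteq> {} \<and> closed C \<and> bounded C \<and> convex C}"

definition msum :: "('a set \<Rightarrow> 'x::real_normed_vector set) \<Rightarrow> (nat \<Rightarrow> 'a set) \<Rightarrow> nat \<Rightarrow> 'x set" where
  "msum M F n = {(\<Sum>i<n. x i) | x. \<forall>i<n. x i \<in> M (F i)}"

definition dH_multimeasure :: "'a measure \<Rightarrow> ('a set \<Rightarrow> 'x::real_normed_vector set) \<Rightarrow> bool" where
  "dH_multimeasure S M \<longleftrightarrow>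
     (\<forall>E\<in>sets S. M E \<in> cb) \<and>
     (\<forall>F::nat \<Rightarrow> 'a set. range F \<subseteq> sets S \<longrightarrow> disjoint_family F \<longrightarrow>
        (\<lambda>n. hausdorff_dist (msum M F n) (M (\<Union>i. F i))) \<longlonglongrightarrow> 0)"

definition neg_mm :: "('a set \<Rightarrow> 'x::real_normed_vector set) \<Rightarrow> 'a set \<Rightarrow> 'x set" where
  "neg_mm N E = uminus ` N E"

definition supp_fun :: "('x::real_normed_vector \<Rightarrow>\<^sub>L real) \<Rightarrow> 'x set \<Rightarrow> real" where
  "supp_fun x' C = (SUP x\<in>C. blinfun_apply x' x)"

text \<open>The space l_infinity(B_X'), realised as the bounded real functions on the dual space
  that vanish outside the dual unit ball B_X'.\<close>
definition linf_ball :: "(('x::real_normed_vector \<Rightarrow>\<^sub>L real) \<Rightarrow> real) set" where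
  "linf_ball = {g. (\<forall>x'. 1 < norm x' \<longrightarrow> g x' = 0) \<and> bounded (range g)}"

definition radstroem :: "'x::real_normed_vector set \<Rightarrow> ('x \<Rightarrow>\<^sub>L real) \<Rightarrow> real" where
  "radstroem A = (\<lambda>x'. if norm x' \<le> 1 then supp_fun x' A else 0)"

text \<open>Elements of the dual l_infinity(B_X')': bounded linear functionals on linf_ball
  (values outside linf_ball are irrelevant).\<close>
definition linf_dual :: "((('x::real_normed_vector \<Rightarrow>\<^sub>L real) \<Rightarrow> real) \<Rightarrow> real) set" where
  "linf_dual = {y. (\<forall>g\<in>linf_ball. \<forall>h\<in>linf_ball. y (\<lambda>x'. g x' + h x') = y g + y h) \<and>
                  (\<forall>c. \<forall>g\<in>linf_ball. y (\<lambda>x'. c * g x') = c * y g) \<and>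
                  (\<exists>K. \<forall>g\<in>linf_ball. \<bar>y g\<bar> \<le> K * (SUP x'. \<bar>g x'\<bar>))}"

definition pos_var :: "'a measure \<Rightarrow> ('a set \<Rightarrow> real) \<Rightarrow> 'a set \<Rightarrow> real" where
  "pos_var S \<nu> E = (SUP F\<in>{F\<in>sets S. F \<subseteq> E}. \<nu> F)"

definition neg_var :: "'a measure \<Rightarrow> ('a set \<Rightarrow> real) \<Rightarrow> 'a set \<Rightarrow> real" where
  "neg_var S \<nu> E = (SUP F\<in>{F\<in>sets S. F \<subseteq> E}. - \<nu> F)"

definition signed_integral :: "'a measure \<Rightarrow> ('a set \<Rightarrow> real) \<Rightarrow> 'a set \<Rightarrow> ('a \<Rightarrow> real) \<Rightarrow> real" where
  "signed_integral S \<nu> E \<theta> =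
     (\<integral>\<omega>. indicator E \<omega> * \<theta> \<omega> \<partial>(measure_of (space S) (sets S) (\<lambda>A. ennreal (pos_var S \<nu> A))))
   - (\<integral>\<omega>. indicator E \<omega> * \<theta> \<omega> \<partial>(measure_of (space S) (sets S) (\<lambda>A. ennreal (neg_var S \<nu> A))))"

definition range_on :: "'a measure \<Rightarrow> ('a set \<Rightarrow> 'x set) \<Rightarrow> 'a set \<Rightarrow> 'x set" where
  "range_on S N E = {z. \<exists>F\<in>sets S. F \<subseteq> E \<and> z \<in> N F}"

definition absolutely_convex :: "'x::real_vector set \<Rightarrow> bool" where
  "absolutely_convex C \<longleftrightarrow> convex C \<and> (\<forall>x\<in>C. \<forall>t::real. \<bar>t\<bar> \<le> 1 \<longrightarrow> t *\<^sub>R x \<in> C)"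

definition closed_aco :: "'x::real_normed_vector set \<Rightarrow> 'x set" where
  "closed_aco A = closure (absolutely_convex hull A)"

end

theory Submission
  imports Defs
begin


definition good_graph :: "('x::real_normed_vector \<Rightarrow> real) \<Rightarrow> ('x \<times> real) set \<Rightarrow> bool" where
  "good_graph p G \<longleftrightarrow> (0,0) \<in> G \<and>
     (\<forall>v a w b. (v,a) \<in> G \<longrightarrow> (w,b) \<in> G \<longrightarrow> (v+w, a+b) \<in> G) \<and>
     (\<forall>t v a. (v,a) \<in> G \<longrightarrow> (t *\<^sub>R v, t * a) \<in> G) \<and>
     (\<forall>v a. (v,a) \<in> G \<longrightarrow> a \<le> p v)"

lemma hahn_banach_sub:
  fixes p :: "'x::real_normed_vector \<Rightarrow> real"
  assumes sub: "\<And>u v. p (u+v) \<le> p u + p v"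
    and hom: "\<And>t u. t \<ge> 0 \<Longrightarrow> p (t *\<^sub>R u) = t * p u"
    and bnd: "\<And>u. p u \<le> K * norm u"
  shows "\<exists>g. bounded_linear g \<and> (\<forall>v. g v \<le> p v) \<and> g x0 = p x0"
proof -
  have p0: "p 0 = 0" using hom[of 0 0] by simp
  have pneg: "- p u \<le> p (- u)" for u
    using sub[of u "-u"] p0 by simp
  define G0 where "G0 = {(t *\<^sub>R x0, t * p x0) | t. True}"
  have G0good: "good_graph p G0"
    unfolding good_graph_def G0_def
  proof (intro conjI allI impI)
    show "(0::'x, 0::real) \<in> {(t *\<^sub>R x0, t * p x0) |t. True}"
      by (rule CollectI, rule exI[of _ 0]) simp
  next
    fix v a w b assume "(v, a) \<in> {(t *\<^sub>R x0, t * p x0) |t. True}" "(w, b) \<in> {(t *\<^sub>R x0, t * p x0) |t. True}"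
    then obtain t s where "v = t *\<^sub>R x0" "a = t * p x0" "w = s *\<^sub>R x0" "b = s * p x0" by auto
    then show "(v + w, a + b) \<in> {(t *\<^sub>R x0, t * p x0) |t. True}"
      by (intro CollectI exI[of _ "t+s"]) (simp add: scaleR_add_left distrib_right)
  next
    fix t v a assume "(v, a) \<in> {(t *\<^sub>R x0, t * p x0) |t. True}"
    then obtain s where "v = s *\<^sub>R x0" "a = s * p x0" by auto
    then show "(t *\<^sub>R v, t * a) \<in> {(t *\<^sub>R x0, t * p x0) |t. True}"
      by (intro CollectI exI[of _ "t * s"]) simp
  next
    fix v a assume "(v, a) \<in> {(t *\<^sub>R x0, t * p x0) |t. True}"
    then obtain s where s: "v = s *\<^sub>R x0" "a = s * p x0" by auto
    show "a \<le> p v"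
    proof (cases "s \<ge> 0")
      case True then show ?thesis using s hom by simp
    next
      case False
      then have "p v = (-s) * p (-x0)" using s hom[of "-s" "-x0"] by simp
      moreover have "(-s) * (- p x0) \<le> (-s) * p (-x0)" using False pneg[of x0]
        by (intro mult_left_mono) auto
      ultimately show ?thesis using s by simp
    qed
  qed
  define A where "A = {G. good_graph p G \<and> G0 \<subseteq> G}"
  have "\<exists>Mx\<in>A. \<forall>X\<in>A. Mx \<subseteq> X \<longrightarrow> X = Mx"
  proof (rule Zorn_Lemma2, intro ballI)
    fix C assume C: "C \<in> chains A"
    show "\<exists>U\<in>A. \<forall>X\<in>C. X \<subseteq> U"
    proof (cases "C = {}")
      case True then show ?thesis using G0good by (auto simp: A_def)
    next
      case False
      have CA: "C \<subseteq> A" and ch: "\<And>X Y. X \<in> C \<Longrightarrow> Y \<in> C \<Longrightarrow> X \<subseteq> Y \<or> Y \<subseteq> X"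
        using C by (auto simp: chains_def chain_subset_def)
      have gC: "\<And>X. X \<in> C \<Longrightarrow> good_graph p X" and G0C: "\<And>X. X \<in> C \<Longrightarrow> G0 \<subseteq> X"
        using CA by (auto simp: A_def)
      have "good_graph p (\<Union>C)"
        unfolding good_graph_def
      proof (intro conjI allI impI)
        show "(0, 0) \<in> \<Union> C" using False gC unfolding good_graph_def by blast
      next
        fix v a w b assume "(v, a) \<in> \<Union> C" "(w, b) \<in> \<Union> C"
        then obtain X Y where XY: "X \<in> C" "Y \<in> C" "(v,a) \<in> X" "(w,b) \<in> Y" by auto
        show "(v + w, a + b) \<in> \<Union> C"
        proof (cases "X \<subseteq> Y")
          case True then show ?thesis using XY gC[of Y] unfolding good_graph_def by blast
        next
          case False then have "Y \<subseteq> X" using ch XY by blast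
          then show ?thesis using XY gC[of X] unfolding good_graph_def by blast
        qed
      next
        fix t v a assume "(v, a) \<in> \<Union> C"
        then show "(t *\<^sub>R v, t * a) \<in> \<Union> C" using gC unfolding good_graph_def by blast
      next
        fix v a assume "(v, a) \<in> \<Union> C"
        then show "a \<le> p v" using gC unfolding good_graph_def by blast
      qed
      moreover have "G0 \<subseteq> \<Union>C" using False G0C by blast
      ultimately show ?thesis by (auto simp: A_def)
    qed
  qed
  then obtain Mx where MA: "Mx \<in> A" and Mmax: "\<And>X. X \<in> A \<Longrightarrow> Mx \<subseteq> X \<Longrightarrow> X = Mx" by blast
  have Mg: "good_graph p Mx" and G0M: "G0 \<subseteq> Mx" using MA by (auto simp: A_def)
  have M0: "(0,0) \<in> Mx"
    and Madd: "\<And>v a w b. (v,a) \<in> Mx \<Longrightarrow> (w,b) \<in> Mx \<Longrightarrow> (v+w, a+b) \<in> Mx"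
    and Msc: "\<And>t v a. (v,a) \<in> Mx \<Longrightarrow> (t *\<^sub>R v, t * a) \<in> Mx"
    and Mdom: "\<And>v a. (v,a) \<in> Mx \<Longrightarrow> a \<le> p v"
    using Mg unfolding good_graph_def by blast+
  have Mfun: "a = b" if "(v,a) \<in> Mx" "(v,b) \<in> Mx" for v a b
  proof -
    have "(0, a - b) \<in> Mx" using Madd[OF that(1) Msc[OF that(2), of "-1"]] by simp
    moreover have "(0, b - a) \<in> Mx" using Madd[OF that(2) Msc[OF that(1), of "-1"]] by simp
    ultimately have "a - b \<le> 0" "b - a \<le> 0" using Mdom p0 by (metis)+
    then show ?thesis by simp
  qed
  have Mtot: "\<exists>a. (z,a) \<in> Mx" for z
  proof (rule ccontr)
    assume nz: "\<nexists>a. (z, a) \<in> Mx"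
    define L where "L = {a - p (v - z) | v a. (v,a) \<in> Mx}"
    define U where "U = {p (w + z) - b | w b. (w,b) \<in> Mx}"
    have LU: "l \<le> u" if lL: "l \<in> L" and uU: "u \<in> U" for l u
    proof -
      obtain v a where l: "l = a - p (v - z)" "(v,a) \<in> Mx" using lL unfolding L_def by blast
      obtain w b where u: "u = p (w + z) - b" "(w,b) \<in> Mx" using uU unfolding U_def by blast
      have "a + b \<le> p (v + w)" using Mdom[OF Madd[OF l(2) u(2)]] .
      also have "\<dots> = p ((v - z) + (w + z))" by (simp add: algebra_simps)
      also have "\<dots> \<le> p (v - z) + p (w + z)" by (rule sub)
      finally show ?thesis using l u by simp
    qed
    have Lne: "L \<noteq> {}" using M0 by (auto simp: L_def)
    have Une: "p z - 0 \<in> U" using M0 unfolding U_def by force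
    define c where "c = Sup L"
    have cL: "l \<le> c" if "l \<in> L" for l
      unfolding c_def using that Une LU by (intro cSup_upper) (auto simp: bdd_above_def)
    have cU: "c \<le> u" if "u \<in> U" for u
      unfolding c_def using that Lne LU by (intro cSup_least) auto
    define M' where "M' = {(v + t *\<^sub>R z, a + t * c) | v a t. (v,a) \<in> Mx}"
    have M'good: "good_graph p M'"
      unfolding good_graph_def
    proof (intro conjI allI impI)
      show "(0, 0) \<in> M'" unfolding M'_def using M0 by force
    next
      fix v a w b assume "(v, a) \<in> M'" "(w, b) \<in> M'"
      then obtain v1 a1 t1 v2 a2 t2 where h: "v = v1 + t1 *\<^sub>R z" "a = a1 + t1 * c" "(v1,a1) \<in> Mx"
        "w = v2 + t2 *\<^sub>R z" "b = a2 + t2 * c" "(v2,a2) \<in> Mx" unfolding M'_def by blast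
      have "v + w = (v1 + v2) + (t1 + t2) *\<^sub>R z" "a + b = (a1 + a2) + (t1 + t2) * c"
        using h by (simp_all add: algebra_simps)
      then show "(v + w, a + b) \<in> M'" unfolding M'_def using Madd[OF h(3) h(6)] by blast
    next
      fix t v a assume "(v, a) \<in> M'"
      then obtain v1 a1 t1 where h: "v = v1 + t1 *\<^sub>R z" "a = a1 + t1 * c" "(v1,a1) \<in> Mx"
        unfolding M'_def by blast
      have "t *\<^sub>R v = t *\<^sub>R v1 + (t * t1) *\<^sub>R z" "t * a = t * a1 + (t * t1) * c"
        using h by (simp_all add: algebra_simps)
      then show "(t *\<^sub>R v, t * a) \<in> M'" unfolding M'_def using Msc[OF h(3)] by blast
    next
      fix v a assume "(v, a) \<in> M'"
      then obtain v1 a1 t where h: "v = v1 + t *\<^sub>R z" "a = a1 + t * c" "(v1,a1) \<in> Mx"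
        unfolding M'_def by blast
      show "a \<le> p v"
      proof (cases "t = 0")
        case True then show ?thesis using h Mdom by simp
      next
        case tnz: False
        show ?thesis
        proof (cases "t > 0")
          case True
          have "(inverse t *\<^sub>R v1, inverse t * a1) \<in> Mx" by (rule Msc[OF h(3)])
          then have "p (inverse t *\<^sub>R v1 + z) - inverse t * a1 \<in> U" unfolding U_def by blast
          then have "c \<le> p (inverse t *\<^sub>R v1 + z) - inverse t * a1" by (rule cU)
          then have "t * c \<le> t * (p (inverse t *\<^sub>R v1 + z) - inverse t * a1)"
            using True by (intro mult_left_mono) auto
          also have "\<dots> = p (t *\<^sub>R (inverse t *\<^sub>R v1 + z)) - a1"
            using True hom[of t] by (simp add: right_diff_distrib)
          also have "t *\<^sub>R (inverse t *\<^sub>R v1 + z) = v" using h True by (simp add: scaleR_add_right)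
          finally show ?thesis using h by simp
        next
          case False
          define s where "s = - t"
          have s: "s > 0" using False tnz by (simp add: s_def)
          have "(inverse s *\<^sub>R v1, inverse s * a1) \<in> Mx" by (rule Msc[OF h(3)])
          then have "inverse s * a1 - p (inverse s *\<^sub>R v1 - z) \<in> L" unfolding L_def by blast
          then have "inverse s * a1 - p (inverse s *\<^sub>R v1 - z) \<le> c" by (rule cL)
          then have "s * (inverse s * a1 - p (inverse s *\<^sub>R v1 - z)) \<le> s * c"
            using s by (intro mult_left_mono) auto
          also have "s * (inverse s * a1 - p (inverse s *\<^sub>R v1 - z)) = a1 - p (s *\<^sub>R (inverse s *\<^sub>R v1 - z))"
            using s hom[of s] by (simp add: right_diff_distrib)
          also have "s *\<^sub>R (inverse s *\<^sub>R v1 - z) = v" using h s by (simp add: s_def scaleR_diff_right)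
          finally show ?thesis using h by (simp add: s_def)
        qed
      qed
    qed
    have "Mx \<subseteq> M'"
    proof
      fix q assume "q \<in> Mx"
      moreover obtain v a where "q = (v, a)" by (cases q)
      ultimately show "q \<in> M'" unfolding M'_def
        by (intro CollectI exI[of _ v] exI[of _ a] exI[of _ "0::real"]) simp
    qed
    moreover have "(z, c) \<in> M'" unfolding M'_def using M0
      by (intro CollectI exI[of _ 0] exI[of _ "0::real"] exI[of _ "1::real"]) simp
    ultimately have "M' = Mx" using Mmax[of M'] M'good G0M by (auto simp: A_def)
    then show False using nz \<open>(z, c) \<in> M'\<close> by blast
  qed
  define g where "g v = (THE a. (v,a) \<in> Mx)" for v
  have gM: "(v, g v) \<in> Mx" for v
    unfolding g_def using Mtot[of v] Mfun by (metis theI)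
  have gadd: "g (u + v) = g u + g v" for u v
    using Mfun[OF gM[of "u+v"] Madd[OF gM[of u] gM[of v]]] .
  have gsc: "g (t *\<^sub>R v) = t * g v" for t v
    using Mfun[OF gM[of "t *\<^sub>R v"] Msc[OF gM[of v]]] .
  have gp: "g v \<le> p v" for v using Mdom[OF gM] .
  have "\<bar>g v\<bar> \<le> norm v * K" for v
  proof -
    have "g v \<le> K * norm v" using gp[of v] bnd[of v] by simp
    moreover have "- g v \<le> K * norm v" using gp[of "-v"] bnd[of "-v"] gsc[of "-1" v] by simp
    ultimately show ?thesis by (simp add: mult.commute)
  qed
  then have "bounded_linear g"
    by (intro bounded_linear_intro[where K = K]) (auto simp: gadd gsc)
  moreover have "g x0 = p x0"
  proof -
    have "(x0, p x0) \<in> Mx" using G0M unfolding G0_def by (force intro: exI[of _ 1])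
    then show ?thesis using Mfun gM by blast
  qed
  ultimately show ?thesis using gp by blast
qed

lemma separation_point:
  fixes C :: "'x::real_normed_vector set"
  assumes cvx: "convex C" and absc: "\<And>c t. c \<in> C \<Longrightarrow> \<bar>t\<bar> \<le> 1 \<Longrightarrow> t *\<^sub>R c \<in> C"
    and C0: "0 \<in> C" and r: "r > 0" and far: "\<And>c. c \<in> C \<Longrightarrow> r \<le> norm (x - c)"
  shows "\<exists>g::'x \<Rightarrow> real. bounded_linear g \<and> 1 \<le> g x \<and> (\<forall>c\<in>C. g c \<le> 1)"
proof -
  define \<Lambda> where "\<Lambda> v = {l. l > 0 \<and> (\<exists>c\<in>C. norm (v - l *\<^sub>R c) < l * r)}" for v
  define p where "p v = Inf (\<Lambda> v)" for v
  have L1: "l \<in> \<Lambda> v" if "l > norm v / r" for l v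
  proof -
    have "0 \<le> norm v / r" using r by simp
    then have lp: "l > 0" using that by linarith
    have "norm v < l * r" using that r by (simp add: field_simps)
    then show ?thesis unfolding \<Lambda>_def using lp C0 by force
  qed
  have Lne: "\<Lambda> v \<noteq> {}" for v using L1[of v "norm v / r + 1"] by auto
  have Lbdd: "bdd_below (\<Lambda> v)" for v unfolding \<Lambda>_def by (auto intro!: bdd_belowI[of _ 0])
  have plow: "p v \<le> l" if "l \<in> \<Lambda> v" for l v
    unfolding p_def using that Lbdd by (rule cInf_lower)
  have pgr: "m \<le> p v" if "\<And>l. l \<in> \<Lambda> v \<Longrightarrow> m \<le> l" for m v
    unfolding p_def using Lne that by (rule cInf_greatest)
  have pnn: "0 \<le> p v" for v by (rule pgr) (auto simp: \<Lambda>_def)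
  have pbnd: "p v \<le> (1 / r) * norm v" for v
  proof (rule field_le_epsilon)
    fix e :: real assume "0 < e"
    then have "norm v / r + e \<in> \<Lambda> v" by (intro L1) auto
    then show "p v \<le> 1 / r * norm v + e" using plow by fastforce
  qed
  have p0: "p 0 = 0" using pnn[of 0] pbnd[of 0] by simp
  have phom1: "p (t *\<^sub>R v) \<le> t * p v" if t: "t > 0" for t v
  proof -
    have "p (t *\<^sub>R v) / t \<le> p v"
    proof (rule pgr)
      fix l assume "l \<in> \<Lambda> v"
      then obtain c where l: "l > 0" "c \<in> C" "norm (v - l *\<^sub>R c) < l * r" unfolding \<Lambda>_def by blast
      have "norm (t *\<^sub>R v - (t * l) *\<^sub>R c) = t * norm (v - l *\<^sub>R c)"
        using t by (metis abs_of_pos norm_scaleR scaleR_diff_right scaleR_scaleR)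
      also have "\<dots> < t * (l * r)" using t l by simp
      finally have "t * l \<in> \<Lambda> (t *\<^sub>R v)" unfolding \<Lambda>_def using l t by (auto simp: mult.assoc)
      then have "p (t *\<^sub>R v) \<le> t * l" by (rule plow)
      then show "p (t *\<^sub>R v) / t \<le> l" using t by (simp add: divide_le_eq mult.commute)
    qed
    then show ?thesis using t by (simp add: divide_le_eq mult.commute)
  qed
  have hom: "p (t *\<^sub>R u) = t * p u" if "t \<ge> 0" for t u
  proof (cases "t = 0")
    case True then show ?thesis using p0 by simp
  next
    case False
    then have t: "t > 0" using that by simp
    have "p u = p (inverse t *\<^sub>R (t *\<^sub>R u))" using t by simp
    also have "\<dots> \<le> inverse t * p (t *\<^sub>R u)" using t by (intro phom1) auto
    finally have "t * p u \<le> p (t *\<^sub>R u)" using t by (simp add: field_simps)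
    then show ?thesis using phom1[OF t, of u] by simp
  qed
  have sub: "p (u + v) \<le> p u + p v" for u v
  proof -
    have "p (u + v) - p v \<le> p u"
    proof (rule pgr)
      fix l assume "l \<in> \<Lambda> u"
      then obtain c where l: "l > 0" "c \<in> C" "norm (u - l *\<^sub>R c) < l * r" unfolding \<Lambda>_def by blast
      have "p (u + v) - l \<le> p v"
      proof (rule pgr)
        fix m assume "m \<in> \<Lambda> v"
        then obtain d where m: "m > 0" "d \<in> C" "norm (v - m *\<^sub>R d) < m * r" unfolding \<Lambda>_def by blast
        define c' where "c' = (l / (l + m)) *\<^sub>R c + (m / (l + m)) *\<^sub>R d"
        have "c' \<in> C" unfolding c'_def using l m
          by (intro convexD[OF cvx]) (auto simp: add_divide_distrib[symmetric])
        have "(l + m) *\<^sub>R c' = l *\<^sub>R c + m *\<^sub>R d" unfolding c'_def using l m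
          by (simp add: scaleR_add_right)
        then have "norm (u + v - (l + m) *\<^sub>R c') = norm ((u - l *\<^sub>R c) + (v - m *\<^sub>R d))"
          by (simp add: algebra_simps)
        also have "\<dots> \<le> norm (u - l *\<^sub>R c) + norm (v - m *\<^sub>R d)" by (rule norm_triangle_ineq)
        also have "\<dots> < (l + m) * r" using l m by (simp add: distrib_right)
        finally have "l + m \<in> \<Lambda> (u + v)" unfolding \<Lambda>_def using l m \<open>c' \<in> C\<close> by auto
        then have "p (u + v) \<le> l + m" by (rule plow)
        then show "p (u + v) - l \<le> m" by simp
      qed
      then show "p (u + v) - p v \<le> l" by simp
    qed
    then show ?thesis by simp
  qed
  obtain g where g: "bounded_linear g" "\<And>v. g v \<le> p v" "g x = p x"
    using hahn_banach_sub[of p "1 / r" x, OF sub hom pbnd] by blast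
  have "1 \<le> p x"
  proof (rule pgr)
    fix l assume "l \<in> \<Lambda> x"
    then obtain c where l: "l > 0" "c \<in> C" "norm (x - l *\<^sub>R c) < l * r" unfolding \<Lambda>_def by blast
    show "1 \<le> l"
    proof (rule ccontr)
      assume "\<not> 1 \<le> l"
      then have "l *\<^sub>R c \<in> C" using l by (intro absc) auto
      moreover have "l * r < r" using \<open>\<not> 1 \<le> l\<close> r by simp
      ultimately show False using far[of "l *\<^sub>R c"] l by linarith
    qed
  qed
  moreover have "p c \<le> 1" if "c \<in> C" for c
    by (rule plow) (use that r in \<open>force simp: \<Lambda>_def intro: bexI[of _ c]\<close>)
  ultimately have "bounded_linear g \<and> 1 \<le> g x \<and> (\<forall>c\<in>C. g c \<le> 1)"
    using g by (auto intro: order_trans)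
  then show ?thesis by blast
qed


lemma int_bound:
  fixes f :: "'a \<Rightarrow> real"
  assumes f: "f \<in> borel_measurable \<mu>" and E: "E \<in> sets \<mu>"
    and fb: "\<And>\<omega>. \<omega> \<in> space \<mu> \<Longrightarrow> \<bar>f \<omega>\<bar> \<le> c * indicator E \<omega>"
    and c: "c \<ge> 0" and em: "emeasure \<mu> E \<le> ennreal \<tau>" and tau: "\<tau> \<ge> 0"
  shows "\<bar>integral\<^sup>L \<mu> f\<bar> \<le> c * \<tau>"
proof -
  have "\<bar>integral\<^sup>L \<mu> f\<bar> \<le> integral\<^sup>L \<mu> (\<lambda>x. \<bar>f x\<bar>)" by simp
  also have "\<dots> = enn2real (\<integral>\<^sup>+x. ennreal \<bar>f x\<bar> \<partial>\<mu>)"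
    by (rule integral_eq_nn_integral) (use f in auto)
  also have "\<dots> \<le> c * \<tau>"
  proof -
    have "(\<integral>\<^sup>+x. ennreal \<bar>f x\<bar> \<partial>\<mu>) \<le> (\<integral>\<^sup>+x. ennreal c * indicator E x \<partial>\<mu>)"
    proof (intro nn_integral_mono)
      fix x assume "x \<in> space \<mu>"
      then have "\<bar>f x\<bar> \<le> c * indicator E x" by (rule fb)
      then show "ennreal \<bar>f x\<bar> \<le> ennreal c * indicator E x"
        by (cases "x \<in> E") (auto simp: ennreal_leI)
    qed
    also have "\<dots> = ennreal c * emeasure \<mu> E" using E by (simp add: nn_integral_cmult_indicator)
    also have "\<dots> \<le> ennreal c * ennreal \<tau>" by (intro mult_left_mono em) auto
    also have "\<dots> = ennreal (c * \<tau>)" using c tau by (simp add: ennreal_mult)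
    finally have le: "(\<integral>\<^sup>+x. ennreal \<bar>f x\<bar> \<partial>\<mu>) \<le> ennreal (c * \<tau>)" .
    have "enn2real (\<integral>\<^sup>+x. ennreal \<bar>f x\<bar> \<partial>\<mu>) \<le> enn2real (ennreal (c * \<tau>))"
      by (rule enn2real_mono[OF le]) simp
    then show ?thesis using c tau by simp
  qed
  finally show ?thesis .
qed

lemma sup_abs_bound:
  fixes f :: "'b \<Rightarrow> real"
  assumes "A \<noteq> {}" "\<And>z. z \<in> A \<Longrightarrow> \<bar>f z\<bar> \<le> \<tau>"
  shows "\<bar>SUP z\<in>A. f z\<bar> \<le> \<tau>"
proof -
  have bdd: "bdd_above (f ` A)" by (rule bdd_aboveI2[of _ _ \<tau>]) (use assms(2) in \<open>force simp: abs_le_iff\<close>)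
  have up: "(SUP z\<in>A. f z) \<le> \<tau>" using assms by (intro cSUP_least) (auto simp: abs_le_iff)
  obtain z0 where z0: "z0 \<in> A" using assms by blast
  have "f z0 \<le> (SUP z\<in>A. f z)" by (rule cSUP_upper[OF z0 bdd])
  moreover have "- \<tau> \<le> f z0" using assms(2)[OF z0] by simp
  ultimately show ?thesis using up by simp
qed

lemma absolutely_convex_Inter: "(\<And>s. s \<in> T \<Longrightarrow> absolutely_convex s) \<Longrightarrow> absolutely_convex (\<Inter>T)"
  unfolding absolutely_convex_def by (auto intro: convex_Inter)

theorem mainTheorem15:
  fixes S :: "'a measure"
    and M N :: "'a set \<Rightarrow> 'x::banach set"
    and \<theta> :: "'a \<Rightarrow> real"
  assumes "dH_multimeasure S M"
    and "dH_multimeasure S N"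
    and "\<theta> \<in> borel_measurable S"
    and "bounded (\<theta> ` space S)"
    and "\<forall>E\<in>sets S. \<forall>y\<in>linf_dual.
           y (radstroem (M E)) = signed_integral S (\<lambda>F. y (radstroem (N F))) E \<theta>"
  shows "\<exists>d>0. \<forall>E\<in>sets S.
           M E \<subseteq> (\<lambda>x. d *\<^sub>R x) ` closed_aco (range_on S N E \<union> range_on S (neg_mm N) E)"
proof -
  note thm_ = assms
  obtain a where a: "\<And>\<omega>. \<omega> \<in> space S \<Longrightarrow> \<bar>\<theta> \<omega>\<bar> \<le> a"
    using assms(4) unfolding bounded_real by blast
  define c where "c = max a 0"
  have c0: "c \<ge> 0" and ca: "\<And>\<omega>. \<omega> \<in> space S \<Longrightarrow> \<bar>\<theta> \<omega>\<bar> \<le> c"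
    using a by (auto simp: c_def le_max_iff_disj)
  define d where "d = 2 * c + 1"
  have d0: "d > 0" using c0 by (simp add: d_def)
  have Mcb: "\<And>E. E \<in> sets S \<Longrightarrow> M E \<in> cb" and Ncb: "\<And>E. E \<in> sets S \<Longrightarrow> N E \<in> cb"
    using assms(1,2) unfolding dH_multimeasure_def by auto
  have "M E \<subseteq> (\<lambda>x. d *\<^sub>R x) ` closed_aco (range_on S N E \<union> range_on S (neg_mm N) E)"
    if E: "E \<in> sets S" for E
  proof
    fix x assume xM: "x \<in> M E"
    define R where "R = range_on S N E \<union> range_on S (neg_mm N) E"
    define H where "H = absolutely_convex hull R"
    define D where "D = (\<lambda>x. d *\<^sub>R x) ` closure H"
    show "x \<in> (\<lambda>x. d *\<^sub>R x) ` closed_aco (range_on S N E \<union> range_on S (neg_mm N) E)"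
    proof (rule ccontr)
      assume "x \<notin> (\<lambda>x. d *\<^sub>R x) ` closed_aco (range_on S N E \<union> range_on S (neg_mm N) E)"
      then have xD: "x \<notin> D" unfolding D_def H_def R_def closed_aco_def .
      have Hac: "absolutely_convex H" unfolding H_def by (rule hull_in) (rule absolutely_convex_Inter, auto)
      have RH: "R \<subseteq> H" unfolding H_def by (rule hull_subset)
      have NER: "N E \<subseteq> R" using E unfolding R_def range_on_def by blast
      have NEne: "N E \<noteq> {}" using Ncb[OF E] by (simp add: cb_def)
      then obtain z0 where "z0 \<in> H" using NER RH by blast
      then have H0: "0 \<in> H" using Hac unfolding absolutely_convex_def
        by (metis abs_zero scaleR_zero_left zero_le_one)
      have clH_sc: "t *\<^sub>R w \<in> closure H" if "w \<in> closure H" "\<bar>t\<bar> \<le> 1" for w t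
      proof -
        have "t *\<^sub>R w \<in> (*\<^sub>R) t ` closure H" using that by blast
        also have "\<dots> = closure ((*\<^sub>R) t ` H)" by (rule closure_scaleR)
        also have "\<dots> \<subseteq> closure H"
          using Hac that(2) unfolding absolutely_convex_def by (intro closure_mono) auto
        finally show ?thesis .
      qed
      have Dcvx: "convex D" unfolding D_def
        using Hac unfolding absolutely_convex_def by (intro convex_scaling convex_closure) auto
      have Dabs: "t *\<^sub>R w \<in> D" if wD: "w \<in> D" and t1: "\<bar>t\<bar> \<le> 1" for w t
      proof -
        obtain w0 where w0: "w0 \<in> closure H" "w = d *\<^sub>R w0" using wD unfolding D_def by blast
        have "t *\<^sub>R w = d *\<^sub>R (t *\<^sub>R w0)" using w0 by (simp add: mult.commute)
        then show ?thesis unfolding D_def using clH_sc[OF w0(1) t1] by blast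
      qed
      have D0: "0 \<in> D" unfolding D_def using H0 closure_subset by force
      have Dcl: "closed D" unfolding D_def by (intro closed_scaling closed_closure)
      define r where "r = infdist x D"
      have r0: "r > 0" unfolding r_def using xD Dcl D0 in_closed_iff_infdist_zero[of D x]
        infdist_nonneg[of x D] by force
      have far: "r \<le> norm (x - w)" if "w \<in> D" for w
        unfolding r_def using infdist_le[OF that, of x] by (simp add: dist_norm)
      obtain g :: "'x \<Rightarrow> real" where g: "bounded_linear g" "1 \<le> g x" "\<And>w. w \<in> D \<Longrightarrow> g w \<le> 1"
        using separation_point[OF Dcvx Dabs D0 r0 far] by blast
      interpret g: bounded_linear g by (rule g(1))
      have gR: "\<bar>g z\<bar> \<le> 1 / d" if "z \<in> N F" "F \<in> sets S" "F \<subseteq> E" for z F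
      proof -
        have "z \<in> R" "- z \<in> R" using that unfolding R_def range_on_def neg_mm_def by blast+
        then have "d *\<^sub>R z \<in> D" "d *\<^sub>R (- z) \<in> D" using RH closure_subset unfolding D_def by blast+
        then have "g (d *\<^sub>R z) \<le> 1" "g (d *\<^sub>R (- z)) \<le> 1" using g(3) by blast+
        then have "d * g z \<le> 1" "d * g (- z) \<le> 1" by (metis g.scaleR real_scaleR_def)+
        then have "g z \<le> 1 / d" "- g z \<le> 1 / d" using d0 by (auto simp: g.neg field_simps)
        then show ?thesis by simp
      qed
      define G where "G = Blinfun g"
      have Gapp: "blinfun_apply G = g" unfolding G_def using g(1) by (rule bounded_linear_Blinfun_apply)
      define ng where "ng = norm G"
      have "g x \<le> ng * norm x" using norm_blinfun[of G x] Gapp by (simp add: ng_def)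
      then have ng0: "ng > 0" using g(2) norm_ge_zero[of G] unfolding ng_def
        by (metis less_eq_real_def mult_zero_left not_one_le_zero order_trans)
      define x' where "x' = (1 / ng) *\<^sub>R G"
      have x'app: "blinfun_apply x' v = g v / ng" for v unfolding x'_def using Gapp by (simp add: scaleR_blinfun.rep_eq)
      have nx': "norm x' \<le> 1" unfolding x'_def using ng0 by (simp add: ng_def)
      define y where "y = (\<lambda>h::('x \<Rightarrow>\<^sub>L real) \<Rightarrow> real. h x')"
      have ydual: "y \<in> linf_dual" unfolding linf_dual_def y_def
      proof (intro CollectI conjI ballI allI exI[of _ 1])
        fix h :: "('x \<Rightarrow>\<^sub>L real) \<Rightarrow> real" assume "h \<in> linf_ball"
        then obtain B where B: "\<And>v. \<bar>h v\<bar> \<le> B" unfolding linf_ball_def bounded_real by blast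
        have "\<bar>h x'\<bar> \<le> (SUP v. \<bar>h v\<bar>)" by (rule cSUP_upper) (use B in \<open>auto intro!: bdd_aboveI2[of _ _ B]\<close>)
        then show "\<bar>h x'\<bar> \<le> 1 * (SUP v. \<bar>h v\<bar>)" by simp
      qed simp_all
      have yrad: "y (radstroem A) = supp_fun x' A" for A
        unfolding y_def radstroem_def using nx' by simp
      define \<tau> where "\<tau> = 1 / (d * ng)"
      have tau0: "\<tau> \<ge> 0" using d0 ng0 by (simp add: \<tau>_def)
      have nu_b: "\<bar>supp_fun x' (N F)\<bar> \<le> \<tau>" if "F \<in> sets S" "F \<subseteq> E" for F
        unfolding supp_fun_def
      proof (rule sup_abs_bound)
        show "N F \<noteq> {}" using Ncb[OF that(1)] by (simp add: cb_def)
      next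
        fix z assume "z \<in> N F"
        then have "\<bar>g z\<bar> \<le> 1 / d" using gR that by blast
        then have "\<bar>g z\<bar> / ng \<le> (1 / d) / ng" using ng0 by (intro divide_right_mono) auto
        then show "\<bar>blinfun_apply x' z\<bar> \<le> \<tau>" using ng0 by (simp add: x'app \<tau>_def)
      qed
      define \<nu> where "\<nu> = (\<lambda>F. y (radstroem (N F)))"
      have nuE: "\<nu> F = supp_fun x' (N F)" for F unfolding \<nu>_def yrad ..
      have idx_ne: "{F \<in> sets S. F \<subseteq> E} \<noteq> {}" using E by blast
      have pv: "pos_var S \<nu> E \<le> \<tau>" unfolding pos_var_def
        using idx_ne nu_b by (intro cSUP_least) (auto simp: nuE abs_le_iff)
      have nv: "neg_var S \<nu> E \<le> \<tau>" unfolding neg_var_def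
        using idx_ne nu_b by (intro cSUP_least) (auto simp: nuE abs_le_iff)
      have ib: "\<bar>integral\<^sup>L (measure_of (space S) (sets S) (\<lambda>A. ennreal (V A))) (\<lambda>\<omega>. indicator E \<omega> * \<theta> \<omega>)\<bar> \<le> c * \<tau>"
        if V: "V E \<le> \<tau>" for V
      proof (rule int_bound[OF _ _ _ c0 _ tau0])
        have sets_eq: "sets (measure_of (space S) (sets S) (\<lambda>A. ennreal (V A))) = sets S"
          by (rule sets.sets_measure_of_eq)
        show "(\<lambda>\<omega>. indicator E \<omega> * \<theta> \<omega>) \<in> borel_measurable (measure_of (space S) (sets S) (\<lambda>A. ennreal (V A)))"
          unfolding measurable_cong_sets[OF sets_eq refl] using E assms(3) by measurable
        show "E \<in> sets (measure_of (space S) (sets S) (\<lambda>A. ennreal (V A)))" using E sets_eq by simp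
        show "\<bar>indicator E \<omega> * \<theta> \<omega>\<bar> \<le> c * indicator E \<omega>"
          if "\<omega> \<in> space (measure_of (space S) (sets S) (\<lambda>A. ennreal (V A)))" for \<omega>
          using that ca[of \<omega>] by (cases "\<omega> \<in> E") (auto simp: space_measure_of_conv)
        have "emeasure (measure_of (space S) (sets S) (\<lambda>A. ennreal (V A))) E \<le> ennreal (V E)"
          by (simp add: emeasure_measure_of_conv)
        also have "\<dots> \<le> ennreal \<tau>" using V by (rule ennreal_leI)
        finally show "emeasure (measure_of (space S) (sets S) (\<lambda>A. ennreal (V A))) E \<le> ennreal \<tau>" .
      qed
      have "supp_fun x' (M E) = signed_integral S \<nu> E \<theta>"
        using assms(5) E ydual unfolding \<nu>_def yrad[symmetric] by blast
      also have "\<dots> \<le> c * \<tau> + c * \<tau>"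
        unfolding signed_integral_def using ib[of "pos_var S \<nu>", OF pv] ib[of "neg_var S \<nu>", OF nv]
        by linarith
      finally have supM: "supp_fun x' (M E) \<le> 2 * c * \<tau>" by (simp add: algebra_simps)
      have "bounded (M E)" using Mcb[OF E] by (simp add: cb_def)
      then obtain B where B: "\<And>z. z \<in> M E \<Longrightarrow> norm z \<le> B" unfolding bounded_iff by blast
      have "blinfun_apply x' x \<le> supp_fun x' (M E)" unfolding supp_fun_def
      proof (rule cSUP_upper[OF xM])
        show "bdd_above (blinfun_apply x' ` M E)"
        proof (rule bdd_aboveI2)
          fix z assume "z \<in> M E"
          have "blinfun_apply x' z \<le> norm x' * norm z" using norm_blinfun[of x' z] by simp
          also have "\<dots> \<le> 1 * B" using nx' B[OF \<open>z \<in> M E\<close>] by (intro mult_mono) auto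
          finally show "blinfun_apply x' z \<le> B" by simp
        qed
      qed
      then have "g x / ng \<le> 2 * c * (1 / (d * ng))" using supM by (simp add: x'app \<tau>_def)
      then have "g x \<le> 2 * c / d" using ng0 d0 by (simp add: field_simps)
      also have "\<dots> < 1" using d0 c0 by (simp add: d_def field_simps)
      finally show False using g(2) by simp
    qed
  qed
  then show ?thesis using d0 by blast
qed

end
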